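(* Let $V$ be a finite set with positive element weights ($\vert A \vert$ = total weight of $A \subseteq V$), let $\mathcal{P}, \mathcal{P}'$ be partitions of $V$ into nonempty parts, and let $P_s \ne P_t \in \mathcal{P}$. Let $\mathcal{S}_s, \mathcal{S}_t \subseteq \mathcal{P}$ with $P_s \in \mathcal{S}_s$, $P_t \in \mathcal{S}_t$ and $\mathcal{S}_s \cap \mathcal{S}_t = \emptyset$, and let $\mathcal{S} \subseteq \mathcal{P}$ with $\mathcal{S} \supseteq \mathcal{S}_s$ and $\mathcal{S} \cap \mathcal{S}_t = \emptyset$. Define $$b(\mathcal{S}_s, \mathcal{S}_t) := \sum_{P' \in \mathcal{P}'} \min\{\vert U_{\mathcal{S}_s} \cap P' \vert, \vert U_{\mathcal{S}_t} \cap P' \vert\}.$$ Then $b(\mathcal{S}_s, \mathcal{S}_t) \le \phi_{\mathcal{P}'}(\mathcal{S})$, where $\phi_{\mathcal{P}'}(\mathcal{S}) := \min_{\mathcal{S}' \subseteq \mathcal{P}'} \vert U_{\mathcal{S}} \triangle U_{\mathcal{S}'} \vert$.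
   Context: $U_{\mathcal{S}}$ denotes the union of the sets in $\mathcal{S}$; $\triangle$ is symmetric difference. *)

theory Defs
  imports Complex_Main
begin

definition is_partition :: "'a set \<Rightarrow> 'a set set \<Rightarrow> bool" where
  "is_partition V P \<longleftrightarrow> \<Union>P = V \<and> {} \<notin> P \<and>
     (\<forall>A\<in>P. \<forall>B\<in>P. A \<noteq> B \<longrightarrow> A \<inter> B = {})"

definition wt :: "('a \<Rightarrow> real) \<Rightarrow> 'a set \<Rightarrow> real" where
  "wt w A = (\<Sum>x\<in>A. w x)"

definition bval :: "('a \<Rightarrow> real) \<Rightarrow> 'a set set \<Rightarrow> 'a set set \<Rightarrow> 'a set set \<Rightarrow> real" where
  "bval w P' Ss St = (\<Sum>Q\<in>P'. min (wt w (\<Union>Ss \<inter> Q)) (wt w (\<Union>St \<inter> Q)))"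

definition phi :: "('a \<Rightarrow> real) \<Rightarrow> 'a set set \<Rightarrow> 'a set set \<Rightarrow> real" where
  "phi w P' S = Min ((\<lambda>S'. wt w ((\<Union>S - \<Union>S') \<union> (\<Union>S' - \<Union>S))) ` Pow P')"

end

theory Submission
  imports Defs
begin

theorem proposition6:
  fixes V :: "'a set" and w :: "'a \<Rightarrow> real"
    and P P' Ss St S :: "'a set set" and Ps Pt :: "'a set"
  assumes "finite V"
    and "\<And>x. x \<in> V \<Longrightarrow> w x > 0"
    and "is_partition V P" and "is_partition V P'"
    and "Ps \<in> P" and "Pt \<in> P" and "Ps \<noteq> Pt"
    and "Ss \<subseteq> P" and "St \<subseteq> P" and "Ps \<in> Ss" and "Pt \<in> St"
    and "Ss \<inter> St = {}"
    and "S \<subseteq> P" and "Ss \<subseteq> S" and "S \<inter> St = {}"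
  shows "bval w P' Ss St \<le> phi w P' S"
proof -
  have P: "\<Union>P = V" "\<forall>A\<in>P. \<forall>B\<in>P. A \<noteq> B \<longrightarrow> A \<inter> B = {}"
    using assms(3) unfolding is_partition_def by auto
  have P': "\<Union>P' = V" "\<forall>A\<in>P'. \<forall>B\<in>P'. A \<noteq> B \<longrightarrow> A \<inter> B = {}"
    using assms(4) unfolding is_partition_def by auto
  have finP': "finite P'" using P'(1) assms(1)
  proof -
    have "P' \<subseteq> Pow V" using P'(1) by blast
    then show ?thesis by (rule finite_subset) (simp add: assms(1))
  qed
  have finQ: "\<And>Q. Q \<in> P' \<Longrightarrow> finite Q" using P'(1) assms(1)
  proof -
    fix Q assume "Q \<in> P'" then have "Q \<subseteq> V" using P'(1) by blast
    then show "finite Q" by (rule finite_subset) (rule assms(1))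
  qed
  let ?X = "\<Union>S" and ?A = "\<Union>Ss" and ?B = "\<Union>St"
  have AX: "?A \<subseteq> ?X" using assms(14) by auto
  have BX: "?B \<inter> ?X = {}"
  proof -
    { fix x C D assume "x \<in> C" "C \<in> St" "x \<in> D" "D \<in> S"
      then have "C \<noteq> D" using assms(15) by auto
      then have False using P(2) \<open>x\<in>C\<close> \<open>x\<in>D\<close> \<open>C\<in>St\<close> \<open>D\<in>S\<close> assms(9,13) by blast }
    then show ?thesis by blast
  qed
  have mono: "\<And>E F. E \<subseteq> F \<Longrightarrow> F \<subseteq> V \<Longrightarrow> wt w E \<le> wt w F"
  proof -
    fix E F assume EF: "E \<subseteq> F" "F \<subseteq> V"
    have "finite F" using EF(2) by (rule finite_subset) (rule assms(1))
    moreover have "\<And>x. x \<in> F - E \<Longrightarrow> 0 \<le> w x" using EF(2) assms(2) by (meson DiffD1 less_imp_le subsetD)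
    ultimately show "wt w E \<le> wt w F" unfolding wt_def using EF(1) by (intro sum_mono2) auto
  qed
  have key: "bval w P' Ss St \<le> wt w ((?X - \<Union>S') \<union> (\<Union>S' - ?X))" if S'P: "S' \<subseteq> P'" for S'
  proof -
    let ?Y = "\<Union>S'"
    let ?D = "(?X - ?Y) \<union> (?Y - ?X)"
    have XV: "?X \<subseteq> V" using assms(13) P(1) by auto
    have YV: "?Y \<subseteq> V" using that P'(1) by auto
    have D: "?D = (\<Union>Q\<in>P'. ?D \<inter> Q)" using XV YV P'(1) by blast
    have "wt w ?D = (\<Sum>Q\<in>P'. wt w (?D \<inter> Q))"
      unfolding wt_def
      apply (subst D)
      apply (rule sum.UNION_disjoint)
      using finP' finQ P'(2) by auto
    moreover have "min (wt w (?A \<inter> Q)) (wt w (?B \<inter> Q)) \<le> wt w (?D \<inter> Q)" if Q: "Q \<in> P'" for Q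
    proof (cases "Q \<in> S'")
      case True
      have "?B \<inter> Q \<subseteq> ?D \<inter> Q" using True BX by blast
      moreover have "?D \<inter> Q \<subseteq> V" using Q P'(1) by blast
      ultimately show ?thesis using mono by (meson min.coboundedI2)
    next
      case False
      have "?Y \<inter> Q = {}"
      proof (rule ccontr)
        assume "?Y \<inter> Q \<noteq> {}"
        then obtain x R where x: "x \<in> R" "R \<in> S'" "x \<in> Q" by blast
        have "R \<noteq> Q" using x(2) False by metis
        moreover have "R \<in> P'" using x(2) S'P by blast
        ultimately have "R \<inter> Q = {}" using P'(2) Q by metis
        then show False using x by blast
      qed
      then have "?A \<inter> Q \<subseteq> ?D \<inter> Q" using AX by blast
      moreover have "?D \<inter> Q \<subseteq> V" using Q P'(1) by blast
      ultimately show ?thesis using mono by (meson min.coboundedI1)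
    qed
    ultimately show ?thesis unfolding bval_def by (simp add: sum_mono)
  qed
  have "phi w P' S \<in> (\<lambda>S'. wt w ((?X - \<Union>S') \<union> (\<Union>S' - ?X))) ` Pow P'"
    unfolding phi_def by (rule Min_in) (use finP' in auto)
  then show ?thesis using key by auto
qed

end
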